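(* Let $\mathcal{T}$ be a tiling of $\mathbb{R}^d$ with finite local complexity, and let $f:X_{\mathcal{T}}\to\mathbb{T}$ be a continuous eigenfunction. Then for every $\varepsilon>0$ there is $R>0$ such that whenever $\mathcal{S}_1,\mathcal{S}_2\in X_{\mathcal{T}}$, $x\in\mathbb{R}^d$ and $\mathcal{S}_1\wedge B(x,R)=\mathcal{S}_2\wedge B(x,R)$, we have $|f(\mathcal{S}_1)-f(\mathcal{S}_2)|<\varepsilon$. Consequently, given $f$ and $\varepsilon>0$, if $R>0$ is large enough and a patch $\mathcal{P}$ has support containing a ball of radius $R$, then the diameter of $f(A_{\mathcal{P}})$ is less than $\varepsilon$, where $A_{\mathcal{P}}=\{\mathcal{S}\in X_{\mathcal{T}}:\mathcal{P}\subset\mathcal{S}\}$.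
   Context: A tile in $\mathbb{R}^d$ is a compact set equal to the closure of its interior, possibly labeled from a finite set. Patches: sets of tiles with pairwise disjoint interiors; tilings: patches whose support (closure of union of supports) is $\mathbb{R}^d$. For a patch $\mathcal{P}$ and $S\subset\mathbb{R}^d$: $\mathcal{P}\sqcap S=\{T\in\mathcal{P}:\operatorname{supp}T\cap S\neq\emptyset\}$ and $\mathcal{P}\wedge S=\{T\in\mathcal{P}:\operatorname{supp}T\subset S\}$. $B(x,R)$ is the closed ball; $B_r=B(0,r)$; $\mathbb{T}=\{z\in\mathbb{C}:|z|=1\}$. Finite local complexity: for each compact $K$, $\{\mathcal{T}\sqcap(K+x)\}_x$ is finite up to translation. The hull $X_{\mathcal{T}}$ is the closure of $\{\mathcal{T}+x\}$ under the metric $\rho(\mathcal{P}_1,\mathcal{P}_2)=\inf$ of $\varepsilon\in(0,1/\sqrt2)$ such that there are $\|x_i\|\le\varepsilon$ with $(\mathcal{P}_1+x_1)\sqcap B_{1/\varepsilon}=(\mathcal{P}_2+x_2)\sqcap B_{1/\varepsilon}$ (or $1/\sqrt2$ if none). A continuous eigenfunction (with eigenvalue $a\in\mathbb{R}^d$) is a continuous map $f:X_{\mathcal{T}}\to\mathbb{T}$ with $f(\mathcal{S}-x)=e^{2\pi i\langle x,a\rangle}f(\mathcal{S})$ for all $\mathcal{S}\in X_{\mathcal{T}}$ and $x\in\mathbb{R}^d$. *)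

theory Defs
  imports "HOL-Analysis.Analysis"
begin

type_synonym ('a, 'l) tile = "'a set \<times> 'l"

definition is_tile :: "('a::euclidean_space, 'l) tile \<Rightarrow> bool" where
  "is_tile T \<longleftrightarrow> compact (fst T) \<and> fst T = closure (interior (fst T))"

definition tile_transl :: "('a::euclidean_space, 'l) tile \<Rightarrow> 'a \<Rightarrow> ('a, 'l) tile" where
  "tile_transl T x = ((\<lambda>y. y + x) ` fst T, snd T)"

definition patch_transl :: "('a::euclidean_space, 'l) tile set \<Rightarrow> 'a \<Rightarrow> ('a, 'l) tile set" where
  "patch_transl P x = (\<lambda>T. tile_transl T x) ` P"

definition is_patch :: "('a::euclidean_space, 'l) tile set \<Rightarrow> bool" where
  "is_patch P \<longleftrightarrow> (\<forall>T\<in>P. is_tile T) \<and>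
     (\<forall>T\<in>P. \<forall>T'\<in>P. T \<noteq> T' \<longrightarrow> interior (fst T) \<inter> interior (fst T') = {})"

definition patch_supp :: "('a::euclidean_space, 'l) tile set \<Rightarrow> 'a set" where
  "patch_supp P = closure (\<Union>T\<in>P. fst T)"

definition is_tiling :: "('a::euclidean_space, 'l) tile set \<Rightarrow> bool" where
  "is_tiling P \<longleftrightarrow> is_patch P \<and> patch_supp P = UNIV"

text \<open>P \<sqinter> S: tiles meeting S;  P \<and> S: tiles contained in S.\<close>
definition meet :: "('a::euclidean_space, 'l) tile set \<Rightarrow> 'a set \<Rightarrow> ('a, 'l) tile set" where
  "meet P S = {T\<in>P. fst T \<inter> S \<noteq> {}}"

definition inside :: "('a::euclidean_space, 'l) tile set \<Rightarrow> 'a set \<Rightarrow> ('a, 'l) tile set" where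
  "inside P S = {T\<in>P. fst T \<subseteq> S}"

definition FLC :: "('a::euclidean_space, 'l) tile set \<Rightarrow> bool" where
  "FLC \<T> \<longleftrightarrow> (\<forall>K. compact K \<longrightarrow>
     (\<exists>F. finite F \<and> (\<forall>x. \<exists>Q\<in>F. \<exists>y. meet \<T> ((\<lambda>z. z + x) ` K) = patch_transl Q y)))"

definition rho :: "('a::euclidean_space, 'l) tile set \<Rightarrow> ('a, 'l) tile set \<Rightarrow> real" where
  "rho P1 P2 = Inf ({e. 0 < e \<and> e < 1 / sqrt 2 \<and>
      (\<exists>x1 x2. norm x1 \<le> e \<and> norm x2 \<le> e \<and>
         meet (patch_transl P1 x1) (cball 0 (1/e)) = meet (patch_transl P2 x2) (cball 0 (1/e)))}
      \<union> {1 / sqrt 2})"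

definition hull_X :: "('a::euclidean_space, 'l) tile set \<Rightarrow> ('a, 'l) tile set set" where
  "hull_X \<T> = {S. \<forall>e>0. \<exists>x. rho S (patch_transl \<T> x) < e}"

definition cont_eigenfunction ::
  "('a::euclidean_space, 'l) tile set \<Rightarrow> (('a, 'l) tile set \<Rightarrow> complex) \<Rightarrow> 'a \<Rightarrow> bool" where
  "cont_eigenfunction \<T> f a \<longleftrightarrow>
     (\<forall>S\<in>hull_X \<T>. norm (f S) = 1) \<and>
     (\<forall>S\<in>hull_X \<T>. \<forall>e>0. \<exists>d>0. \<forall>S'\<in>hull_X \<T>. rho S' S < d \<longrightarrow> dist (f S') (f S) < e) \<and>
     (\<forall>S\<in>hull_X \<T>. \<forall>x. f (patch_transl S (- x)) = exp (2 * pi * \<i> * complex_of_real (x \<bullet> a)) * f S)"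

definition A_patch :: "('a::euclidean_space, 'l) tile set \<Rightarrow> ('a, 'l) tile set \<Rightarrow> ('a, 'l) tile set set" where
  "A_patch \<T> P = {S\<in>hull_X \<T>. P \<subseteq> S}"

end

theory Submission
  imports Defs
begin


lemma img_add_comm: "(\<lambda>y. y + v) ` A = (+) v ` (A::'a::real_normed_vector set)"
  by (rule image_cong) (auto simp: add.commute)

lemma tt_comp: "tile_transl (tile_transl t u) v = tile_transl t (u + v)"
  unfolding tile_transl_def by (auto simp: image_image add.assoc)

lemma tt_0: "tile_transl t 0 = t"
  unfolding tile_transl_def by (cases t) auto

lemma tt_inj: assumes "tile_transl t v = tile_transl t' v" shows "t = t'"
proof -
  have "tile_transl (tile_transl t v) (-v) = tile_transl (tile_transl t' v) (-v)" using assms by simp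
  then show ?thesis by (simp add: tt_comp tt_0)
qed

lemma tt_fst: "fst (tile_transl t v) = (\<lambda>y. y + v) ` fst t"
  by (simp add: tile_transl_def)

lemma pt_comp: "patch_transl (patch_transl P u) v = patch_transl P (u + v)"
  unfolding patch_transl_def by (auto simp: image_image tt_comp)

lemma pt_0: "patch_transl P 0 = P"
  unfolding patch_transl_def by (simp add: tt_0)

lemma pt_inj: assumes "patch_transl P v = patch_transl P' v" shows "P = P'"
proof -
  have "patch_transl (patch_transl P v) (-v) = patch_transl (patch_transl P' v) (-v)" using assms by simp
  then show ?thesis by (simp add: pt_comp pt_0)
qed

lemma mem_pt: "t \<in> patch_transl P v \<longleftrightarrow> tile_transl t (-v) \<in> P"
proof
  assume "t \<in> patch_transl P v"
  then obtain s where "s \<in> P" "t = tile_transl s v" unfolding patch_transl_def by auto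
  then show "tile_transl t (-v) \<in> P" by (simp add: tt_comp tt_0)
next
  assume "tile_transl t (-v) \<in> P"
  moreover have "t = tile_transl (tile_transl t (-v)) v" by (simp add: tt_comp tt_0)
  ultimately show "t \<in> patch_transl P v" unfolding patch_transl_def by blast
qed

lemma meet_pt: fixes P :: "('a::euclidean_space,'l) tile set" shows "meet (patch_transl P v) S = patch_transl (meet P ((\<lambda>z. z - v) ` S)) v"
proof (rule set_eqI)
  fix t :: "('a,'l) tile"
  have inj: "inj (\<lambda>z. z - v)" by (simp add: inj_on_def)
  have e: "fst (tile_transl t (-v)) = (\<lambda>z. z - v) ` fst t" by (simp add: tt_fst)
  have "fst (tile_transl t (-v)) \<inter> (\<lambda>z. z - v) ` S = (\<lambda>z. z - v) ` (fst t \<inter> S)"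
    unfolding e by (simp add: image_Int[OF inj])
  then have "fst (tile_transl t (-v)) \<inter> (\<lambda>z. z - v) ` S \<noteq> {} \<longleftrightarrow> fst t \<inter> S \<noteq> {}" by simp
  then show "t \<in> meet (patch_transl P v) S \<longleftrightarrow> t \<in> patch_transl (meet P ((\<lambda>z. z - v) ` S)) v"
    unfolding meet_def mem_pt by simp
qed

lemma cball_sub: fixes v :: "'a::real_normed_vector" shows "(\<lambda>z. z - v) ` cball c r = cball (c - v) (r::real)"
proof -
  have "x \<in> (\<lambda>z. z - v) ` cball c r" if "x \<in> cball (c - v) r" for x
    using that by (intro image_eqI[of _ _ "x + v"]) (auto simp: dist_norm algebra_simps)
  then show ?thesis by (auto simp: dist_norm algebra_simps)
qed

lemma cball_add: fixes x :: "'a::real_normed_vector" shows "(\<lambda>z. z + x) ` cball 0 r = cball x (r::real)"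
  using cball_sub[of "-x" 0 r] by simp

lemma meet_pt_cball: "meet (patch_transl P v) (cball c r) = patch_transl (meet P (cball (c - v) r)) v"
  by (simp add: meet_pt cball_sub)

lemma meet_mono: "A \<subseteq> B \<Longrightarrow> meet P A \<subseteq> meet P B"
  unfolding meet_def by auto

lemma meet_meet: "A \<subseteq> B \<Longrightarrow> meet (meet P B) A = meet P A"
  unfolding meet_def by auto

lemma meet_sub: "meet P A \<subseteq> P" unfolding meet_def by auto

lemma is_tile_tt: "is_tile t \<Longrightarrow> is_tile (tile_transl t v)"
  unfolding is_tile_def tt_fst img_add_comm
  by (simp add: compact_translation interior_translation closure_translation)

lemma interior_tt: "interior (fst (tile_transl t v)) = (\<lambda>y. y + v) ` interior (fst t)"
  unfolding tt_fst img_add_comm by (simp add: interior_translation)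

lemma is_patch_pt: "is_patch (P::('a::euclidean_space,'l) tile set) \<Longrightarrow> is_patch (patch_transl P v)"
proof -
  assume P: "is_patch P"
  show ?thesis unfolding is_patch_def
  proof (intro conjI ballI impI)
    fix t assume "t \<in> patch_transl P v"
    then obtain s where "s \<in> P" "t = tile_transl s v" unfolding patch_transl_def by auto
    moreover have "is_tile s" using P \<open>s \<in> P\<close> unfolding is_patch_def by blast
    ultimately show "is_tile t" using is_tile_tt by simp
  next
    fix t t' assume "t \<in> patch_transl P v" "t' \<in> patch_transl P v" "t \<noteq> t'"
    then obtain s s' where "s \<in> P" "t = tile_transl s v" "s' \<in> P" "t' = tile_transl s' v" "s \<noteq> s'"
      unfolding patch_transl_def by auto
    then have "interior (fst s) \<inter> interior (fst s') = {}" using P unfolding is_patch_def by auto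
    moreover have "inj (\<lambda>y::'a. y + v)" by (simp add: inj_on_def)
    ultimately have "(\<lambda>y. y + v) ` interior (fst s) \<inter> (\<lambda>y. y + v) ` interior (fst s') = {}"
      by (simp add: image_Int[symmetric])
    then show "interior (fst t) \<inter> interior (fst t') = {}"
      using \<open>t = _\<close> \<open>t' = _\<close> by (simp add: interior_tt)
  qed
qed

lemma is_patch_subset: assumes "is_patch P" "Q \<subseteq> P" shows "is_patch Q"
proof -
  have h1: "\<forall>T\<in>P. is_tile T" and h2: "\<forall>T\<in>P. \<forall>T'\<in>P. T \<noteq> T' \<longrightarrow> interior (fst T) \<inter> interior (fst T') = {}"
    using assms(1) by (simp_all add: is_patch_def)
  have "\<forall>T\<in>Q. is_tile T"
  proof
    fix T assume "T \<in> Q" then have "T \<in> P" using assms(2) by (rule rev_subsetD)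
    then show "is_tile T" by (rule bspec[OF h1])
  qed
  moreover have "\<forall>T\<in>Q. \<forall>T'\<in>Q. T \<noteq> T' \<longrightarrow> interior (fst T) \<inter> interior (fst T') = {}"
  proof (intro ballI impI)
    fix t t' assume "t \<in> Q" "t' \<in> Q" "t \<noteq> t'"
    then have "t \<in> P" "t' \<in> P" using assms(2) by auto
    then show "interior (fst t) \<inter> interior (fst t') = {}" using h2 \<open>t \<noteq> t'\<close> by simp
  qed
  ultimately show ?thesis by (simp add: is_patch_def)
qed



lemma sqrt2_facts: "sqrt 2 < (2::real)" "1/2 < 1 / sqrt (2::real)" "1 < sqrt (2::real)"
proof -
  show a: "sqrt 2 < (2::real)" by (rule real_less_lsqrt) auto
  show "1 < sqrt (2::real)" by simp
  then show "1/2 < 1 / sqrt (2::real)" using a by (simp add: field_simps)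
qed

lemma rho_le:
  assumes "0 < e" "e < 1 / sqrt 2" "norm x1 \<le> e" "norm x2 \<le> e"
    "meet (patch_transl P1 x1) (cball 0 (1/e)) = meet (patch_transl P2 x2) (cball 0 (1/e))"
  shows "rho P1 P2 \<le> e"
  unfolding rho_def
proof (rule cInf_lower)
  show "e \<in> {e. 0 < e \<and> e < 1 / sqrt 2 \<and>
      (\<exists>x1 x2. norm x1 \<le> e \<and> norm x2 \<le> e \<and>
         meet (patch_transl P1 x1) (cball 0 (1/e)) = meet (patch_transl P2 x2) (cball 0 (1/e)))}
      \<union> {1 / sqrt 2}" using assms by blast
  show "bdd_below ({e. 0 < e \<and> e < 1 / sqrt 2 \<and>
      (\<exists>x1 x2. norm x1 \<le> e \<and> norm x2 \<le> e \<and>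
         meet (patch_transl P1 x1) (cball 0 (1/e)) = meet (patch_transl P2 x2) (cball 0 (1/e)))}
      \<union> {1 / sqrt 2})"
    by (rule bdd_belowI[of _ 0]) auto
qed

lemma rho_le_cball:
  assumes "sqrt 2 < r" "meet P1 (cball 0 r) = meet P2 (cball 0 r)"
  shows "rho P1 P2 \<le> 1 / r"
proof -
  have r: "0 < r" using assms(1) sqrt2_facts by linarith
  have "1 / r < 1 / sqrt 2" using assms(1) by (simp add: frac_less2 r)
  then show ?thesis
    using assms r by (intro rho_le[of _ 0 0]) (auto simp: pt_0)
qed

lemma rho_sym: "rho P1 P2 = rho P2 P1"
proof -
  have "{e. 0 < e \<and> e < 1 / sqrt 2 \<and>
      (\<exists>x1 x2. norm x1 \<le> e \<and> norm x2 \<le> e \<and>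
         meet (patch_transl P1 x1) (cball 0 (1/e)) = meet (patch_transl P2 x2) (cball 0 (1/e)))} =
     {e. 0 < e \<and> e < 1 / sqrt 2 \<and>
      (\<exists>x1 x2. norm x1 \<le> e \<and> norm x2 \<le> e \<and>
         meet (patch_transl P2 x1) (cball 0 (1/e)) = meet (patch_transl P1 x2) (cball 0 (1/e)))}"
    by (intro Collect_cong conj_cong refl iffI; elim exE conjE; metis)
  then show ?thesis unfolding rho_def by simp
qed

lemma rho_lt:
  assumes "rho P1 P2 < e" "e \<le> 1 / sqrt 2"
  shows "\<exists>e'>0. e' < e \<and> (\<exists>x1 x2. norm x1 \<le> e' \<and> norm x2 \<le> e' \<and>
           meet (patch_transl P1 x1) (cball 0 (1/e')) = meet (patch_transl P2 x2) (cball 0 (1/e')))"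
proof -
  let ?A = "{e. 0 < e \<and> e < 1 / sqrt 2 \<and>
      (\<exists>x1 x2. norm x1 \<le> e \<and> norm x2 \<le> e \<and>
         meet (patch_transl P1 x1) (cball 0 (1/e)) = meet (patch_transl P2 x2) (cball 0 (1/e)))}
      \<union> {1 / sqrt 2}"
  have "Inf ?A < e" using assms(1) unfolding rho_def .
  then obtain y where "y \<in> ?A" "y < e" using cInf_lessD[of ?A e] by blast
  then show ?thesis using assms(2) by auto
qed

lemma pt_in_hull: "patch_transl T y \<in> hull_X T"
  unfolding hull_X_def
proof (intro CollectI allI impI)
  fix e :: real assume e: "0 < e"
  define e' where "e' = min (e/2) (1/2)"
  have "e' < 1 / sqrt 2" using sqrt2_facts(2) unfolding e'_def by linarith
  then have "rho (patch_transl T y) (patch_transl T y) \<le> e'"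
    using e by (intro rho_le[of _ 0 0]) (auto simp: e'_def)
  moreover have "e' < e" using e by (simp add: e'_def)
  ultimately show "\<exists>x. rho (patch_transl T y) (patch_transl T x) < e"
    by (intro exI[of _ y]) linarith
qed



definition diam_le :: "('a::euclidean_space, 'l) tile set \<Rightarrow> real \<Rightarrow> bool" where
  "diam_le P D \<longleftrightarrow> (\<forall>t\<in>P. \<forall>p\<in>fst t. \<forall>q\<in>fst t. dist p q \<le> D)"

definition ne_inside :: "('a::euclidean_space, 'l) tile set \<Rightarrow> 'a set \<Rightarrow> ('a, 'l) tile set" where
  "ne_inside P S = {t\<in>P. fst t \<noteq> {} \<and> fst t \<subseteq> S}"

lemma diam_le_pt: assumes "diam_le P D" shows "diam_le (patch_transl P v) D"
  unfolding diam_le_def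
proof (intro ballI)
  fix t p q assume t: "t \<in> patch_transl P v" and p: "p \<in> fst t" and q: "q \<in> fst t"
  obtain s where s: "s \<in> P" "t = tile_transl s v" using t unfolding patch_transl_def by auto
  have "p - v \<in> fst s" "q - v \<in> fst s" using p q s(2) by (auto simp: tt_fst)
  then have "dist (p - v) (q - v) \<le> D" using assms s(1) unfolding diam_le_def by blast
  then show "dist p q \<le> D" by (simp add: dist_norm)
qed

lemma meet_in_ball:
  assumes "diam_le P D" "t \<in> meet P (cball c r)" shows "fst t \<subseteq> cball c (r + D)"
proof
  fix q assume q: "q \<in> fst t"
  obtain p where p: "p \<in> fst t" "p \<in> cball c r" using assms(2) unfolding meet_def by auto
  have "t \<in> P" using assms(2) unfolding meet_def by auto
  then have "dist p q \<le> D" using assms(1) p q unfolding diam_le_def by blast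
  moreover have "dist c p \<le> r" using p by simp
  ultimately show "q \<in> cball c (r + D)" using dist_triangle[of c q p] by simp
qed

lemma ne_from_meet:
  assumes "meet P A = meet P' A" "B \<subseteq> A" shows "ne_inside P B = ne_inside P' B"
proof -
  have "t \<in> P'" if "t \<in> ne_inside P B" for t
  proof -
    have "t \<in> meet P A" using that assms(2) unfolding ne_inside_def meet_def by auto
    then show ?thesis using assms(1) unfolding meet_def by auto
  qed
  moreover have "t \<in> P" if "t \<in> ne_inside P' B" for t
  proof -
    have "t \<in> meet P' A" using that assms(2) unfolding ne_inside_def meet_def by auto
    then show ?thesis using assms(1) unfolding meet_def by auto
  qed
  ultimately show ?thesis unfolding ne_inside_def by blast
qed

lemma meet_from_ne:
  assumes "diam_le P D" "diam_le P' D" "ne_inside P B = ne_inside P' B" "cball c (r + D) \<subseteq> B"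
  shows "meet P (cball c r) = meet P' (cball c r)"
proof -
  have "t \<in> P'" if "t \<in> meet P (cball c r)" for t
  proof -
    have "fst t \<subseteq> B" using meet_in_ball[OF assms(1) that] assms(4) by blast
    then have "t \<in> ne_inside P B" using that unfolding meet_def ne_inside_def by auto
    then show ?thesis using assms(3) unfolding ne_inside_def by auto
  qed
  moreover have "t \<in> P" if "t \<in> meet P' (cball c r)" for t
  proof -
    have "fst t \<subseteq> B" using meet_in_ball[OF assms(2) that] assms(4) by blast
    then have "t \<in> ne_inside P' B" using that unfolding meet_def ne_inside_def by auto
    then show ?thesis using assms(3) unfolding ne_inside_def by auto
  qed
  ultimately show ?thesis unfolding meet_def by blast
qed

lemma ne_mono: assumes "ne_inside P B = ne_inside P' B" "B' \<subseteq> B"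
  shows "ne_inside P B' = ne_inside P' B'"
proof -
  have "ne_inside P B' = ne_inside (ne_inside P B) B'" "ne_inside P' B' = ne_inside (ne_inside P' B) B'"
    using assms(2) unfolding ne_inside_def by auto
  then show ?thesis using assms(1) by simp
qed

lemma ne_from_inside: "inside P B = inside P' B \<Longrightarrow> ne_inside P B = ne_inside P' B"
  unfolding inside_def ne_inside_def by blast

lemma tile_int_ne: assumes "is_tile t" "fst t \<noteq> {}" shows "interior (fst t) \<noteq> {}"
  using assms unfolding is_tile_def by auto

locale tset =
  fixes T :: "('a::euclidean_space, 'l) tile set"
    and f :: "('a, 'l) tile set \<Rightarrow> complex" and a :: 'a
  assumes til: "is_tiling T" and flc: "FLC T" and eig: "cont_eigenfunction T f a"
begin

lemma T_patch: "is_patch T" using til unfolding is_tiling_def by simp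

lemma T_tile: "t \<in> T \<Longrightarrow> is_tile t" using T_patch by (simp add: is_patch_def)

lemma T_disj: "t \<in> T \<Longrightarrow> t' \<in> T \<Longrightarrow> t \<noteq> t' \<Longrightarrow> interior (fst t) \<inter> interior (fst t') = {}"
  using T_patch by (simp add: is_patch_def)

lemma meet_point: assumes "t \<in> T" "p \<in> interior (fst t)" shows "meet T {p} = {t}"
proof
  have "p \<in> fst t" using assms(2) interior_subset by blast
  then show "{t} \<subseteq> meet T {p}" using assms(1) unfolding meet_def by simp
  show "meet T {p} \<subseteq> {t}"
  proof
    fix t' assume "t' \<in> meet T {p}"
    then have t': "t' \<in> T" "p \<in> fst t'" unfolding meet_def by auto
    show "t' \<in> {t}"
    proof (rule ccontr)
      assume "t' \<notin> {t}"
      then have d: "interior (fst t) \<inter> interior (fst t') = {}" using T_disj assms(1) t'(1) by blast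
      have "fst t' = closure (interior (fst t'))" using T_tile[OF t'(1)] unfolding is_tile_def by simp
      then have "p \<in> closure (interior (fst t'))" using t'(2) by simp
      then have "interior (fst t) \<inter> closure (interior (fst t')) \<noteq> {}" using assms(2) by blast
      then show False using d open_Int_closure_eq_empty[of "interior (fst t)" "interior (fst t')"] by simp
    qed
  qed
qed

lemma protos_exist: "\<exists>PI. finite PI \<and> (\<forall>s\<in>PI. is_tile s \<and> fst s \<noteq> {}) \<and>
   (\<forall>t\<in>T. fst t \<noteq> {} \<longrightarrow> (\<exists>s\<in>PI. \<exists>y. t = tile_transl s y))"
proof -
  obtain F0 where F0: "finite F0" "\<forall>x. \<exists>Q\<in>F0. \<exists>y. meet T ((\<lambda>z. z + x) ` {0}) = patch_transl Q y"
    using flc[unfolded FLC_def, rule_format, OF compact_sing[of 0]] by blast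
  define PI where "PI = {s. {s} \<in> F0 \<and> is_tile s \<and> fst s \<noteq> {}}"
  have "PI \<subseteq> (\<lambda>s. {s}) -` F0" unfolding PI_def by auto
  moreover have "finite ((\<lambda>s. {s}) -` F0)" by (rule finite_vimageI[OF F0(1)]) (simp add: inj_on_def)
  ultimately have fin: "finite PI" by (rule finite_subset)
  have A: "\<exists>s\<in>PI. \<exists>y. t = tile_transl s y" if t: "t \<in> T" "fst t \<noteq> {}" for t
  proof -
    obtain p where p: "p \<in> interior (fst t)" using tile_int_ne[OF T_tile[OF t(1)] t(2)] by blast
    obtain Q y where Q: "Q \<in> F0" "meet T {p} = patch_transl Q y" using F0(2)[rule_format, of p] by auto
    then have e: "patch_transl Q y = {t}" using meet_point[OF t(1) p] by simp
    define s where "s = tile_transl t (-y)"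
    have "q = s" if "q \<in> Q" for q
    proof -
      have "tile_transl q y = t" using e that unfolding patch_transl_def by auto
      then show ?thesis unfolding s_def by (auto simp: tt_comp tt_0)
    qed
    moreover have "Q \<noteq> {}" using e unfolding patch_transl_def by auto
    ultimately have "Q = {s}" by blast
    moreover have "is_tile s" unfolding s_def by (rule is_tile_tt[OF T_tile[OF t(1)]])
    moreover have "fst s \<noteq> {}" using t(2) unfolding s_def by (simp add: tt_fst)
    ultimately have "s \<in> PI" using Q(1) unfolding PI_def by simp
    moreover have "t = tile_transl s y" unfolding s_def by (simp add: tt_comp tt_0)
    ultimately show ?thesis by blast
  qed
  have B: "\<forall>s\<in>PI. is_tile s \<and> fst s \<noteq> {}" unfolding PI_def by simp
  have A': "\<forall>t\<in>T. fst t \<noteq> {} \<longrightarrow> (\<exists>s\<in>PI. \<exists>y. t = tile_transl s y)" using A by simp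
  show ?thesis by (rule exI[of _ PI], intro conjI fin B A')
qed

definition PI where "PI = (SOME PI. finite PI \<and> (\<forall>s\<in>PI. is_tile s \<and> fst s \<noteq> {}) \<and>
   (\<forall>t\<in>T. fst t \<noteq> {} \<longrightarrow> (\<exists>s\<in>PI. \<exists>y. t = tile_transl s y)))"

lemma PI: "finite PI" "\<And>s. s \<in> PI \<Longrightarrow> is_tile s \<and> fst s \<noteq> {}"
   "\<And>t. t \<in> T \<Longrightarrow> fst t \<noteq> {} \<Longrightarrow> (\<exists>s\<in>PI. \<exists>y. t = tile_transl s y)"
  using someI_ex[OF protos_exist] unfolding PI_def[symmetric] by blast+

definition D where "D = (\<Sum>s\<in>PI. diameter (fst s))"

lemma D_nonneg: "0 \<le> D"
  unfolding D_def using PI(2) by (intro sum_nonneg diameter_ge_0) (auto simp: is_tile_def compact_imp_bounded)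

lemma diam_T: "diam_le T D"
  unfolding diam_le_def
proof (intro ballI)
  fix t p q assume t: "t \<in> T" and p: "p \<in> fst t" and q: "q \<in> fst t"
  then obtain s y where s: "s \<in> PI" "t = tile_transl s y" using PI(3)[of t] by blast
  have b: "bounded (fst s)" using PI(2)[OF s(1)] by (simp add: is_tile_def compact_imp_bounded)
  have "p - y \<in> fst s" "q - y \<in> fst s" using p q s(2) by (auto simp: tt_fst)
  then have "dist (p - y) (q - y) \<le> diameter (fst s)" by (rule diameter_bounded_bound[OF b])
  also have "\<dots> \<le> D" unfolding D_def
    using PI(1) s(1) PI(2) by (intro member_le_sum diameter_ge_0) (auto simp: is_tile_def compact_imp_bounded)
  finally show "dist p q \<le> D" by (simp add: dist_norm)
qed

lemma diam_ptT: "diam_le (patch_transl T v) D" by (rule diam_le_pt[OF diam_T])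

lemma T_cover: assumes "0 < r" shows "\<exists>t\<in>T. \<exists>q\<in>fst t. dist q c < r"
proof -
  have "c \<in> closure (\<Union>t\<in>T. fst t)" using til unfolding is_tiling_def patch_supp_def by simp
  then obtain q where "q \<in> (\<Union>t\<in>T. fst t)" "dist q c < r" using assms unfolding closure_approachable by blast
  then show ?thesis by blast
qed

end


context tset begin

definition ph :: "'a \<Rightarrow> complex" where
  "ph x = exp (2 * pi * \<i> * complex_of_real (x \<bullet> a))"

lemma ph_norm: "norm (ph x) = 1" unfolding ph_def by simp

lemma ph_add: "ph (x + y) = ph x * ph y"
  unfolding ph_def by (simp add: inner_add_left distrib_left exp_add)

lemma ph_0: "ph 0 = 1" unfolding ph_def by simp

lemma ph_small: assumes "0 < e" shows "\<exists>g>0. \<forall>s. norm s < g \<longrightarrow> norm (ph s - 1) < e"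
proof -
  have "isCont ph 0" unfolding ph_def by (intro continuous_intros)
  then obtain g where "g > 0" "\<forall>s. dist s 0 < g \<longrightarrow> dist (ph s) (ph 0) < e"
    using assms unfolding continuous_at_eps_delta by blast
  then show ?thesis by (auto simp: ph_0 dist_norm)
qed

lemma f_norm: "S \<in> hull_X T \<Longrightarrow> norm (f S) = 1"
  using eig unfolding cont_eigenfunction_def by blast

lemma f_cont: "S \<in> hull_X T \<Longrightarrow> 0 < e \<Longrightarrow> \<exists>d>0. \<forall>S'\<in>hull_X T. rho S' S < d \<longrightarrow> dist (f S') (f S) < e"
  using eig unfolding cont_eigenfunction_def by blast

lemma f_tr: assumes "S \<in> hull_X T" shows "f (patch_transl S y) = ph (-y) * f S"
proof -
  have "f (patch_transl S (- (-y))) = exp (2 * pi * \<i> * complex_of_real ((-y) \<bullet> a)) * f S"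
    using eig assms unfolding cont_eigenfunction_def by blast
  then show ?thesis unfolding ph_def by simp
qed

lemma T_hull: "T \<in> hull_X T" using pt_in_hull[of T 0] by (simp add: pt_0)

lemma fT: "f (patch_transl T u) = ph (-u) * f T" using f_tr[OF T_hull] .

lemma fT_norm: "norm (f T) = 1" using f_norm[OF T_hull] .

lemma hull_meet:
  assumes "S \<in> hull_X T" "0 < \<eta>" "\<eta> \<le> 1 / sqrt 2"
  shows "\<exists>y x1 x2 e'. 0 < e' \<and> e' < \<eta> \<and> norm x1 \<le> e' \<and> norm x2 \<le> e' \<and> rho S (patch_transl T y) < \<eta> \<and>
     meet S (cball (-x1) (1/e')) = meet (patch_transl T (y + x2 - x1)) (cball (-x1) (1/e'))"
proof -
  obtain y where y: "rho S (patch_transl T y) < \<eta>" using assms(1,2) unfolding hull_X_def by blast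
  obtain e' x1 x2 where e': "0 < e'" "e' < \<eta>" "norm x1 \<le> e'" "norm x2 \<le> e'"
    "meet (patch_transl S x1) (cball 0 (1/e')) = meet (patch_transl (patch_transl T y) x2) (cball 0 (1/e'))"
    using rho_lt[OF y assms(3)] by blast
  have "patch_transl (patch_transl T y) x2 = patch_transl (patch_transl T (y + x2 - x1)) x1"
    by (simp add: pt_comp)
  then have "patch_transl (meet S (cball (0 - x1) (1/e'))) x1 =
      patch_transl (meet (patch_transl T (y + x2 - x1)) (cball (0 - x1) (1/e'))) x1"
    using e'(5) by (simp add: meet_pt_cball)
  then have "meet S (cball (0 - x1) (1/e')) = meet (patch_transl T (y + x2 - x1)) (cball (0 - x1) (1/e'))"
    by (rule pt_inj)
  then have "meet S (cball (-x1) (1/e')) = meet (patch_transl T (y + x2 - x1)) (cball (-x1) (1/e'))"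
    by simp
  then show ?thesis using e' y by blast
qed

lemma hull_meet_ball:
  assumes "S \<in> hull_X T" "0 \<le> R" "0 < \<eta>" "\<eta> \<le> 1 / sqrt 2" "\<eta> \<le> 1 / (norm c + R + 2)"
  shows "\<exists>y x1 x2 e'. 0 < e' \<and> e' < \<eta> \<and> norm x1 \<le> e' \<and> norm x2 \<le> e' \<and> rho S (patch_transl T y) < \<eta> \<and>
     cball c R \<subseteq> cball (-x1) (1/e') \<and>
     meet S (cball (-x1) (1/e')) = meet (patch_transl T (y + x2 - x1)) (cball (-x1) (1/e'))"
proof -
  obtain y x1 x2 e' where h: "0 < e'" "e' < \<eta>" "norm x1 \<le> e'" "norm x2 \<le> e'" "rho S (patch_transl T y) < \<eta>"
     "meet S (cball (-x1) (1/e')) = meet (patch_transl T (y + x2 - x1)) (cball (-x1) (1/e'))"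
    using hull_meet[OF assms(1,3,4)] by blast
  have pos: "0 < norm c + R + 2" using assms(2) by (simp add: add_nonneg_pos)
  have "e' < 1 / (norm c + R + 2)" using h(2) assms(5) by linarith
  then have big: "norm c + R + 2 < 1 / e'" using h(1) pos by (simp add: field_simps)
  have x1: "norm x1 \<le> 1"
  proof -
    have X: "2 \<le> norm c + R + 2" using assms(2) by simp
    have "1 / (norm c + R + 2) \<le> 1/2" by (rule divide_left_mono) (use X in auto)
    then show ?thesis using h(2,3) assms(5) by linarith
  qed
  have "cball c R \<subseteq> cball (-x1) (1/e')"
  proof
    fix z assume "z \<in> cball c R"
    then have "dist c z \<le> R" by simp
    moreover have "dist (-x1) z \<le> norm x1 + dist c z + norm c"
      using norm_triangle_ineq4[of "-x1 - c" "z - c"] norm_triangle_ineq[of "x1" "c"]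
      by (simp add: dist_norm norm_minus_commute algebra_simps)
    ultimately show "z \<in> cball (-x1) (1/e')" using x1 big by simp
  qed
  then show ?thesis using h by blast
qed

lemma hull_sub_pt:
  assumes "S \<in> hull_X T" "0 \<le> r" shows "\<exists>u. meet S (cball 0 r) \<subseteq> patch_transl T u"
proof -
  define \<eta> where "\<eta> = min (1 / sqrt 2) (1 / (norm (0::'a) + r + 2))"
  have "0 < \<eta>" using assms(2) sqrt2_facts unfolding \<eta>_def by (simp add: add_nonneg_pos)
  then obtain y x1 x2 e' where h: "cball 0 r \<subseteq> cball (-x1) (1/e')"
     "meet S (cball (-x1) (1/e')) = meet (patch_transl T (y + x2 - x1)) (cball (-x1) (1/e'))"
    using hull_meet_ball[OF assms(1) assms(2), of \<eta> 0] unfolding \<eta>_def by auto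
  have "meet S (cball 0 r) \<subseteq> meet S (cball (-x1) (1/e'))" by (rule meet_mono[OF h(1)])
  also have "\<dots> \<subseteq> patch_transl T (y + x2 - x1)" using h(2) meet_sub by metis
  finally show ?thesis by blast
qed

lemma hull_patch: assumes "S \<in> hull_X T" shows "is_patch S"
  unfolding is_patch_def
proof (intro conjI ballI impI)
  fix t assume t: "t \<in> S"
  show "is_tile t"
  proof (cases "fst t = {}")
    case True then show ?thesis unfolding is_tile_def by simp
  next
    case False
    then obtain p where p: "p \<in> fst t" by blast
    obtain u where u: "meet S (cball 0 (norm p)) \<subseteq> patch_transl T u" using hull_sub_pt[OF assms, of "norm p"] by auto
    have "t \<in> meet S (cball 0 (norm p))" using t p unfolding meet_def by auto
    then have "t \<in> patch_transl T u" using u by blast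
    then show ?thesis using is_patch_pt[OF T_patch, of u] by (simp add: is_patch_def)
  qed
next
  fix t t' assume t: "t \<in> S" "t' \<in> S" "t \<noteq> t'"
  show "interior (fst t) \<inter> interior (fst t') = {}"
  proof (cases "fst t = {} \<or> fst t' = {}")
    case True then show ?thesis by auto
  next
    case False
    then obtain p p' where p: "p \<in> fst t" "p' \<in> fst t'" by blast
    obtain u where u: "meet S (cball 0 (norm p + norm p')) \<subseteq> patch_transl T u"
      using hull_sub_pt[OF assms, of "norm p + norm p'"] by auto
    have "t \<in> meet S (cball 0 (norm p + norm p'))" "t' \<in> meet S (cball 0 (norm p + norm p'))"
      using t p unfolding meet_def by (auto intro!: exI[of _ p] exI[of _ p'])
    then have "t \<in> patch_transl T u" "t' \<in> patch_transl T u" using u by blast+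
    then show ?thesis using is_patch_pt[OF T_patch, of u] t(3) by (simp add: is_patch_def)
  qed
qed

lemma approx:
  assumes "S \<in> hull_X T" "0 < e" "0 \<le> R"
  shows "\<exists>u. ne_inside S (cball c R) = ne_inside (patch_transl T u) (cball c R) \<and>
             norm (f S - f (patch_transl T u)) < e"
proof -
  obtain d where d: "d > 0" "\<forall>S'\<in>hull_X T. rho S' S < d \<longrightarrow> dist (f S') (f S) < e/2"
    using f_cont[OF assms(1)] assms(2) by (meson half_gt_zero)
  obtain g where g: "g > 0" "\<forall>s. norm s < g \<longrightarrow> norm (ph s - 1) < e/2"
    using ph_small assms(2) by (meson half_gt_zero)
  define \<eta> where "\<eta> = min (min d (g/2)) (min (1 / sqrt 2) (1 / (norm c + R + 2)))"
  have "0 < \<eta>" using assms(3) sqrt2_facts d g unfolding \<eta>_def by (simp add: add_nonneg_pos)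
  moreover have "\<eta> \<le> 1 / sqrt 2" "\<eta> \<le> 1 / (norm c + R + 2)" unfolding \<eta>_def by simp_all
  ultimately obtain y x1 x2 e' where h: "0 < e'" "e' < \<eta>" "norm x1 \<le> e'" "norm x2 \<le> e'" "rho S (patch_transl T y) < \<eta>"
     "cball c R \<subseteq> cball (-x1) (1/e')"
     "meet S (cball (-x1) (1/e')) = meet (patch_transl T (y + x2 - x1)) (cball (-x1) (1/e'))"
    using hull_meet_ball[OF assms(1) assms(3), of \<eta> c] by blast
  define u where "u = y + x2 - x1"
  have ne: "ne_inside S (cball c R) = ne_inside (patch_transl T u) (cball c R)"
    using ne_from_meet[OF h(7) h(6)] unfolding u_def .
  have "rho S (patch_transl T y) < d" using h(5) unfolding \<eta>_def by linarith
  then have "rho (patch_transl T y) S < d" using rho_sym[of S "patch_transl T y"] by simp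
  then have 1: "norm (f (patch_transl T y) - f S) < e/2"
    using d(2) pt_in_hull[of T y] by (simp add: dist_norm)
  have "norm (x1 - x2) \<le> norm x1 + norm x2" by (rule norm_triangle_ineq4)
  then have "norm (x1 - x2) < g" using h(2,3,4) unfolding \<eta>_def by linarith
  then have 2: "norm (ph (x1 - x2) - 1) < e/2" using g(2) by blast
  have "-u = -y + (x1 - x2)" unfolding u_def by (simp add: algebra_simps)
  then have phu: "ph (-u) = ph (-y) * ph (x1 - x2)" by (simp only: ph_add)
  have "f (patch_transl T u) - f (patch_transl T y) = ph (-y) * f T * (ph (x1 - x2) - 1)"
    unfolding fT phu by (simp add: algebra_simps)
  then have 3: "norm (f (patch_transl T u) - f (patch_transl T y)) < e/2"
    using 2 by (simp add: norm_mult ph_norm fT_norm)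
  have "f S - f (patch_transl T u) = (f S - f (patch_transl T y)) + (f (patch_transl T y) - f (patch_transl T u))"
    by simp
  then have "norm (f S - f (patch_transl T u)) \<le> norm (f S - f (patch_transl T y)) + norm (f (patch_transl T y) - f (patch_transl T u))"
    by (metis norm_triangle_ineq)
  also have "\<dots> = norm (f (patch_transl T y) - f S) + norm (f (patch_transl T u) - f (patch_transl T y))"
    by (simp add: norm_minus_commute)
  finally have "norm (f S - f (patch_transl T u)) < e" using 1 3 by linarith
  then show ?thesis using ne by blast
qed

end


lemma sep_finite:
  fixes S :: "'a::euclidean_space set"
  assumes "bounded S" "0 < r" "\<forall>x\<in>S. \<forall>y\<in>S. x \<noteq> y \<longrightarrow> r \<le> dist x y"
  shows "finite S"
proof (rule ccontr)
  assume inf: "infinite S"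
  have "compact (closure S)" using assms(1) by simp
  then obtain x where "x islimpt S" using Heine_Borel_imp_Bolzano_Weierstrass[OF _ inf closure_subset] by blast
  then have la: "\<forall>e>0. \<exists>x'\<in>S. x' \<noteq> x \<and> dist x' x < e" unfolding islimpt_approachable .
  obtain x1 where x1: "x1 \<in> S" "x1 \<noteq> x" "dist x1 x < r/2" using la assms(2) by (meson half_gt_zero)
  have "0 < dist x1 x" using x1(2) by simp
  then have "0 < min (r/2) (dist x1 x)" using assms(2) by simp
  then obtain x2 where x2: "x2 \<in> S" "x2 \<noteq> x" "dist x2 x < min (r/2) (dist x1 x)"
    using la by blast
  have "x1 \<noteq> x2" using x2(3) by auto
  moreover have "dist x1 x2 < r"
  proof -
    have "dist x2 x < r/2" using x2(3) by simp
    moreover have "dist x1 x2 \<le> dist x1 x + dist x2 x" using dist_triangle3[of x1 x2 x] by (simp add: dist_commute)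
    ultimately show ?thesis using x1(3) by linarith
  qed
  moreover have "r \<le> dist x1 x2" using assms(3) x1(1) x2(1) \<open>x1 \<noteq> x2\<close> by blast
  ultimately show False by linarith
qed

lemma transl_inv:
  fixes A :: "'a::euclidean_space set"
  assumes "compact A" "A \<noteq> {}" "(\<lambda>z. z + v) ` A \<subseteq> A"
  shows "v = 0"
proof -
  have "continuous_on A (\<lambda>z. z \<bullet> v)" by (intro continuous_intros)
  then obtain p where p: "p \<in> A" "\<forall>q\<in>A. q \<bullet> v \<le> p \<bullet> v" using continuous_attains_sup[OF assms(1,2)] by blast
  have "p + v \<in> A" using assms(3) p(1) by blast
  then have "(p + v) \<bullet> v \<le> p \<bullet> v" using p(2) by blast
  then have "v \<bullet> v \<le> 0" by (simp add: inner_add_left)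
  moreover have "0 \<le> v \<bullet> v" by simp
  ultimately have "v \<bullet> v = 0" by linarith
  then show ?thesis by simp
qed

lemma tt_eq_shift:
  assumes "is_tile s" "fst s \<noteq> {}" "tile_transl s u = tile_transl s v" shows "u = v"
proof -
  have "fst (tile_transl s u) = fst (tile_transl s v)" using assms(3) by simp
  then have A: "(\<lambda>y. y + u) ` fst s = (\<lambda>y. y + v) ` fst s" by (simp add: tt_fst)
  have "(\<lambda>z. z + (u - v)) ` fst s \<subseteq> fst s"
  proof
    fix w assume "w \<in> (\<lambda>z. z + (u - v)) ` fst s"
    then obtain z where z: "z \<in> fst s" "w = z + (u - v)" by blast
    have "z + u \<in> (\<lambda>y. y + v) ` fst s" using A z(1) by blast
    then obtain z' where z': "z' \<in> fst s" "z + u = z' + v" by blast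
    have "w = (z + u) - v" using z(2) by (simp add: algebra_simps)
    also have "\<dots> = z'" using z'(2) by simp
    finally show "w \<in> fst s" using z'(1) by simp
  qed
  moreover have "compact (fst s)" using assms(1) by (simp add: is_tile_def)
  ultimately have "u - v = 0" using assms(2) transl_inv[of "fst s" "u - v"] by simp
  then show ?thesis by simp
qed

context tset begin

definition psel where "psel s = (SOME p. p \<in> fst s)"

lemma psel: "s \<in> PI \<Longrightarrow> psel s \<in> fst s"
  unfolding psel_def using PI(2) by (simp add: some_in_eq)

definition CC where "CC = 1 + D + (\<Sum>s\<in>PI. norm (psel s))"

lemma CC_ge: "1 \<le> CC" unfolding CC_def using D_nonneg by (simp add: sum_nonneg)

lemma f_diff: "norm (f (patch_transl T u) - f (patch_transl T v)) = norm (1 - ph (u - v))"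
proof -
  have "-v = -u + (u - v)" by simp
  then have "ph (-v) = ph (-u) * ph (u - v)" by (simp only: ph_add)
  then have "f (patch_transl T u) - f (patch_transl T v) = ph (-u) * f T * (1 - ph (u - v))"
    unfolding fT by (simp add: algebra_simps)
  then show ?thesis by (simp add: norm_mult ph_norm fT_norm)
qed

lemma reposition:
  assumes "meet (patch_transl T u) (cball c (R + CC)) = meet (patch_transl T v) (cball c (R + CC))"
  shows "\<exists>s\<in>PI. \<exists>y w. s \<in> patch_transl T y \<and>
     meet (patch_transl T y) (cball 0 R) = meet (patch_transl T (y + w)) (cball 0 R) \<and>
     norm (f (patch_transl T u) - f (patch_transl T v)) = norm (f (patch_transl T y) - f (patch_transl T (y + w)))"
proof -
  obtain t q where tq: "t \<in> T" "q \<in> fst t" "dist q (c - u) < 1" using T_cover[of 1 "c - u"] by auto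
  then obtain s y0 where s: "s \<in> PI" "t = tile_transl s y0" using PI(3)[of t] by blast
  define y where "y = -y0"
  define w where "w = v - u"
  define sh where "sh = u + y0"
  have sy: "s \<in> patch_transl T y" unfolding mem_pt y_def using s(2) tq(1) by simp
  have e1: "patch_transl T u = patch_transl (patch_transl T y) sh" unfolding y_def sh_def by (simp add: pt_comp)
  have e2: "patch_transl T v = patch_transl (patch_transl T (y + w)) sh" unfolding y_def sh_def w_def by (simp add: pt_comp)
  have "patch_transl (meet (patch_transl T y) (cball (c - sh) (R + CC))) sh =
        patch_transl (meet (patch_transl T (y + w)) (cball (c - sh) (R + CC))) sh"
    using assms unfolding e1 e2 meet_pt_cball .
  then have m: "meet (patch_transl T y) (cball (c - sh) (R + CC)) = meet (patch_transl T (y + w)) (cball (c - sh) (R + CC))"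
    by (rule pt_inj)
  have "norm (c - sh) \<le> CC"
  proof -
    have q1: "q - y0 \<in> fst s" using tq(2) s(2) by (auto simp: tt_fst)
    have "psel s + y0 \<in> fst t" using psel[OF s(1)] s(2) by (auto simp: tt_fst)
    then have "dist q (psel s + y0) \<le> D" using diam_T tq(1,2) unfolding diam_le_def by blast
    then have a: "norm (q - y0 - psel s) \<le> D" by (simp add: dist_norm algebra_simps)
    have b: "norm (psel s) \<le> (\<Sum>s\<in>PI. norm (psel s))" using PI(1) s(1) by (intro member_le_sum) auto
    have c: "norm (c - u - q) < 1" using tq(3) by (simp add: dist_norm norm_minus_commute algebra_simps)
    have eq: "c - sh = (c - u - q) + (q - y0 - psel s) + psel s" unfolding sh_def by (simp add: algebra_simps)
    have eqn: "norm (c - sh) = norm ((c - u - q) + (q - y0 - psel s) + psel s)" by (rule arg_cong[OF eq])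
    have "norm ((c - u - q) + (q - y0 - psel s) + psel s) \<le> norm ((c - u - q) + (q - y0 - psel s)) + norm (psel s)"
      by (rule norm_triangle_ineq)
    moreover have "norm ((c - u - q) + (q - y0 - psel s)) \<le> norm (c - u - q) + norm (q - y0 - psel s)"
      by (rule norm_triangle_ineq)
    ultimately have "norm (c - sh) \<le> norm (c - u - q) + norm (q - y0 - psel s) + norm (psel s)"
      unfolding eqn by linarith
    then show ?thesis using a b c unfolding CC_def by linarith
  qed
  have sub: "cball 0 R \<subseteq> cball (c - sh) (R + CC)"
  proof
    fix z assume "z \<in> cball (0::'a) R"
    then have "norm z \<le> R" by simp
    moreover have "dist (c - sh) z \<le> norm (c - sh) + norm z"
      by (simp add: dist_norm norm_triangle_ineq4)
    ultimately show "z \<in> cball (c - sh) (R + CC)" using \<open>norm (c - sh) \<le> CC\<close> by simp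
  qed
  have "meet (patch_transl T y) (cball 0 R) = meet (meet (patch_transl T y) (cball (c - sh) (R + CC))) (cball 0 R)"
    by (simp only: meet_meet[OF sub])
  also have "\<dots> = meet (meet (patch_transl T (y + w)) (cball (c - sh) (R + CC))) (cball 0 R)" by (simp only: m)
  also have "\<dots> = meet (patch_transl T (y + w)) (cball 0 R)" by (simp only: meet_meet[OF sub])
  finally have "meet (patch_transl T y) (cball 0 R) = meet (patch_transl T (y + w)) (cball 0 R)" .
  moreover have "norm (f (patch_transl T u) - f (patch_transl T v)) = norm (f (patch_transl T y) - f (patch_transl T (y + w)))"
    unfolding f_diff w_def by (simp add: algebra_simps)
  ultimately show ?thesis using s(1) sy by blast
qed

end


context tset begin

lemma limit_point:
  fixes N0 :: "nat set" and y :: "nat \<Rightarrow> 'a"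
  assumes s: "s \<in> PI" and inf: "infinite N0" and sy: "\<forall>n\<in>N0. s \<in> patch_transl T (y n)"
  shows "\<exists>S\<in>hull_X T. \<forall>r k. \<exists>n\<in>N0. k \<le> n \<and> meet (patch_transl T (y n)) (cball 0 r) = meet S (cball 0 r)"
proof -
  define X where "X n = patch_transl T (y n)" for n
  define p where "p = psel s"
  have p: "p \<in> fst s" using psel[OF s] unfolding p_def .
  have "interior (fst s) \<noteq> {}" using PI(2)[OF s] tile_int_ne by blast
  then obtain c where c: "c \<in> interior (fst s)" by blast
  then obtain \<rho> where cr: "0 < \<rho>" "ball c \<rho> \<subseteq> interior (fst s)"
    using open_contains_ball[of "interior (fst s)"] by blast
  define rr where "rr m = real m + norm p + 1" for m :: nat
  define g where "g m n = meet (X n) (cball 0 (rr m))" for m n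
  have sg: "s \<in> g m n" if "n \<in> N0" for m n
  proof -
    have "s \<in> X n" using sy that unfolding X_def by blast
    moreover have "p \<in> cball 0 (rr m)" unfolding rr_def by simp
    ultimately show ?thesis using p unfolding g_def meet_def by auto
  qed
  have Xpatch: "is_patch (X n)" for n unfolding X_def by (rule is_patch_pt[OF T_patch])
  have fin: "finite (g m ` N0)" for m
  proof -
    obtain F where F: "finite F" "\<forall>x. \<exists>Q\<in>F. \<exists>t. meet T ((\<lambda>z. z + x) ` cball 0 (rr m)) = patch_transl Q t"
      using flc[unfolded FLC_def, rule_format, OF compact_cball[of 0 "rr m"]] by blast
    define G where "G Q = {t. \<exists>n\<in>N0. g m n = patch_transl Q t}" for Q
    have sub: "g m ` N0 \<subseteq> (\<Union>Q\<in>F. (\<lambda>t. patch_transl Q t) ` G Q)"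
    proof
      fix P assume "P \<in> g m ` N0"
      then obtain n where n: "n \<in> N0" "P = g m n" by blast
      obtain Q t where Q: "Q \<in> F" "meet T (cball (- y n) (rr m)) = patch_transl Q t"
        using F(2)[rule_format, of "- y n"] unfolding cball_add by blast
      have "g m n = patch_transl (meet T (cball (0 - y n) (rr m))) (y n)"
        unfolding g_def X_def by (rule meet_pt_cball)
      also have "\<dots> = patch_transl Q (t + y n)" using Q(2) by (simp add: pt_comp)
      finally have gm: "g m n = patch_transl Q (t + y n)" .
      then have "t + y n \<in> G Q" using n(1) unfolding G_def by blast
      then show "P \<in> (\<Union>Q\<in>F. (\<lambda>t. patch_transl Q t) ` G Q)" using Q(1) n(2) gm by blast
    qed
    have finG: "finite (G Q)" for Q
    proof -
      have memQ: "tile_transl s (-t) \<in> Q" if "t \<in> G Q" for t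
      proof -
        from that obtain n where n: "n \<in> N0" "g m n = patch_transl Q t" unfolding G_def by blast
        have "s \<in> patch_transl Q t" using sg[of n m, OF n(1)] n(2) by simp
        then show ?thesis by (simp add: mem_pt)
      qed
      have shift: "tile_transl (tile_transl s (-t')) t = tile_transl s (t - t')" for t t'
      proof -
        have "-t' + t = t - t'" by simp
        then show ?thesis by (simp add: tt_comp)
      qed
      have sep: "\<forall>t\<in>G Q. \<forall>t'\<in>G Q. t \<noteq> t' \<longrightarrow> \<rho> \<le> dist t t'"
      proof (intro ballI impI)
        fix t t' assume t: "t \<in> G Q" "t' \<in> G Q" "t \<noteq> t'"
        show "\<rho> \<le> dist t t'"
        proof (rule ccontr)
          assume "\<not> \<rho> \<le> dist t t'"
          then have small: "norm (t - t') < \<rho>" by (simp add: dist_norm)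
          obtain n where n: "n \<in> N0" "g m n = patch_transl Q t" using t(1) unfolding G_def by blast
          have "tile_transl (tile_transl s (-t')) t \<in> patch_transl Q t"
            using memQ[OF t(2)] unfolding patch_transl_def by blast
          then have "tile_transl s (t - t') \<in> g m n" using n(2) shift by simp
          then have A: "tile_transl s (t - t') \<in> X n" using meet_sub[of "X n"] unfolding g_def by blast
          have B: "s \<in> X n" using sy n(1) unfolding X_def by blast
          have ne: "tile_transl s (t - t') \<noteq> s"
          proof
            assume "tile_transl s (t - t') = s"
            then have "tile_transl s (t - t') = tile_transl s 0" by (simp add: tt_0)
            then have "t - t' = 0" using tt_eq_shift PI(2)[OF s] by blast
            then show False using t(3) by simp
          qed
          have disj: "interior (fst (tile_transl s (t - t'))) \<inter> interior (fst s) = {}"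
            using Xpatch[of n] A B ne by (simp add: is_patch_def)
          have "dist c (c - (t - t')) < \<rho>" using small by (simp add: dist_norm)
          then have "c - (t - t') \<in> interior (fst s)" using cr(2) by auto
          then have "(c - (t - t')) + (t - t') \<in> (\<lambda>y. y + (t - t')) ` interior (fst s)" by (rule imageI)
          then have "c \<in> interior (fst (tile_transl s (t - t')))" unfolding interior_tt by simp
          then show False using disj c by blast
        qed
      qed
      have bnd: "bounded (G Q)"
      proof (cases "G Q = {}")
        case True then show ?thesis by simp
      next
        case False
        then obtain t0 where t0: "t0 \<in> G Q" by blast
        have "G Q \<subseteq> cball 0 (rr m + D + norm p + norm t0)"
        proof
          fix t assume t: "t \<in> G Q"
          obtain n where n: "n \<in> N0" "g m n = patch_transl Q t" using t unfolding G_def by blast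
          have "tile_transl (tile_transl s (-t0)) t \<in> patch_transl Q t"
            using memQ[OF t0] unfolding patch_transl_def by blast
          then have "tile_transl s (t - t0) \<in> g m n" using n(2) shift by simp
          then have "tile_transl s (t - t0) \<in> meet (patch_transl T (y n)) (cball 0 (rr m))"
            unfolding g_def X_def .
          then have "fst (tile_transl s (t - t0)) \<subseteq> cball 0 (rr m + D)"
            by (rule meet_in_ball[OF diam_ptT])
          moreover have "p + (t - t0) \<in> fst (tile_transl s (t - t0))" using p by (simp add: tt_fst)
          ultimately have h: "norm (p + (t - t0)) \<le> rr m + D" by auto
          have "norm t \<le> norm t0 + norm (t - t0)" by (rule norm_triangle_sub)
          moreover have "norm (t - t0) \<le> norm (p + (t - t0)) + norm ((t - t0) - (p + (t - t0)))"
            by (rule norm_triangle_sub)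
          moreover have "norm ((t - t0) - (p + (t - t0))) = norm p" by simp
          ultimately show "t \<in> cball 0 (rr m + D + norm p + norm t0)" using h by simp
        qed
        then show ?thesis by (rule bounded_subset[OF bounded_cball])
      qed
      show ?thesis by (rule sep_finite[OF bnd cr(1) sep])
    qed
    have "finite (\<Union>Q\<in>F. (\<lambda>t. patch_transl Q t) ` G Q)"
      by (intro finite_UN_I F(1) finite_imageI finG)
    then show ?thesis by (rule finite_subset[OF sub])
  qed
  define N where "N = rec_nat N0 (\<lambda>m A. {n\<in>A. g m n = (SOME P. infinite {n\<in>A. g m n = P})})"
  have N0: "N 0 = N0" unfolding N_def by simp
  have NS: "N (Suc m) = {n\<in>N m. g m n = (SOME P. infinite {n\<in>N m. g m n = P})}" for m
    unfolding N_def by simp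
  have Ninf: "N m \<subseteq> N0 \<and> infinite (N m)" for m
  proof (induction m)
    case 0 show ?case using N0 inf by simp
  next
    case (Suc m)
    have "g m ` N m \<subseteq> g m ` N0" using Suc by (intro image_mono) simp
    then have "finite (g m ` N m)" using fin[of m] by (rule finite_subset)
    then obtain P where "infinite (g m -` {P} \<inter> N m)" using inf_img_fin_dom'[of "g m" "N m"] Suc by blast
    moreover have "(g m -` {P} \<inter> N m) = {n\<in>N m. g m n = P}" by auto
    ultimately have "infinite {n\<in>N m. g m n = P}" by simp
    then have "infinite {n\<in>N m. g m n = (SOME P. infinite {n\<in>N m. g m n = P})}" by (rule someI)
    then show ?case using Suc unfolding NS by auto
  qed
  define P where "P m = (SOME P. infinite {n\<in>N m. g m n = P})" for m
  have NS': "N (Suc m) = {n\<in>N m. g m n = P m}" for m using NS unfolding P_def by simp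
  have Nmono: "N m' \<subseteq> N m" if "m \<le> m'" for m m'
    by (rule lift_Suc_antimono_le[of N, OF _ that]) (auto simp: NS')
  have Nne: "\<exists>n. n \<in> N m" for m using Ninf[of m] infinite_imp_nonempty by blast
  have gP: "g m n = P m" if "n \<in> N (Suc m)" for m n using that NS' by auto
  have rr_mono: "rr m \<le> rr m'" if "m \<le> m'" for m m' unfolding rr_def using that by simp
  have cons: "P m = meet (P m') (cball 0 (rr m))" if "m \<le> m'" for m m'
  proof -
    obtain n where n: "n \<in> N (Suc m')" using Nne by blast
    have "n \<in> N (Suc m)" using Nmono[of "Suc m" "Suc m'"] that n by auto
    then have "P m = g m n" using gP by simp
    also have "\<dots> = meet (g m' n) (cball 0 (rr m))"
      unfolding g_def by (rule meet_meet[symmetric]) (rule subset_cball[OF rr_mono[OF that]])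
    also have "g m' n = P m'" using gP n by simp
    finally show ?thesis .
  qed
  define S where "S = (\<Union>m. P m)"
  have Pmeet: "P m = meet (X n) (cball 0 (rr m))" if "n \<in> N (Suc m)" for m n
    using gP[OF that] unfolding g_def by simp
  have SP: "meet S (cball 0 (rr m)) = P m" for m
  proof
    show "meet S (cball 0 (rr m)) \<subseteq> P m"
    proof
      fix t assume "t \<in> meet S (cball 0 (rr m))"
      then obtain k where k: "t \<in> P k" and hit: "fst t \<inter> cball 0 (rr m) \<noteq> {}"
        unfolding S_def meet_def by auto
      show "t \<in> P m"
      proof (cases "m \<le> k")
        case True then show ?thesis using cons[OF True] k hit unfolding meet_def by auto
      next
        case False then have km: "k \<le> m" by simp
        have "P k \<subseteq> P m" using cons[OF km] meet_sub[of "P m" "cball 0 (rr k)"] by simp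
        then show ?thesis using k by blast
      qed
    qed
    show "P m \<subseteq> meet S (cball 0 (rr m))"
    proof
      fix t assume t: "t \<in> P m"
      obtain n where n: "n \<in> N (Suc m)" using Nne by blast
      then have "t \<in> meet (X n) (cball 0 (rr m))" using Pmeet[OF n] t by simp
      then have "fst t \<inter> cball 0 (rr m) \<noteq> {}" unfolding meet_def by simp
      moreover have "t \<in> S" using t unfolding S_def by blast
      ultimately show "t \<in> meet S (cball 0 (rr m))" unfolding meet_def by simp
    qed
  qed
  have key: "\<exists>n\<in>N0. k \<le> n \<and> meet (X n) (cball 0 r) = meet S (cball 0 r)" for r k
  proof -
    define m where "m = nat \<lceil>r\<rceil>"
    have "r \<le> real m" unfolding m_def by (rule real_nat_ceiling_ge)
    then have rm: "r \<le> rr m" unfolding rr_def using norm_ge_zero[of p] by linarith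
    have "infinite (N (Suc m))" using Ninf[of "Suc m"] by simp
    then have "\<forall>k. \<exists>n\<ge>k. n \<in> N (Suc m)" using infinite_nat_iff_unbounded_le[of "N (Suc m)"] by blast
    then obtain n where n: "n \<in> N (Suc m)" "k \<le> n" by blast
    have nN0: "n \<in> N0" using Ninf[of "Suc m"] n(1) by blast
    have "meet (X n) (cball 0 r) = meet (meet (X n) (cball 0 (rr m))) (cball 0 r)"
      by (simp only: meet_meet[OF subset_cball[OF rm]])
    also have "\<dots> = meet (meet S (cball 0 (rr m))) (cball 0 r)" using Pmeet[OF n(1)] SP[of m] by simp
    also have "\<dots> = meet S (cball 0 r)" by (simp only: meet_meet[OF subset_cball[OF rm]])
    finally show ?thesis using nN0 n(2) by blast
  qed
  have "S \<in> hull_X T"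
    unfolding hull_X_def
  proof (intro CollectI allI impI)
    fix e :: real assume e: "0 < e"
    define r where "r = max 2 (2/e)"
    have r2: "2 \<le> r" "2/e \<le> r" unfolding r_def by simp_all
    then have rs: "sqrt 2 < r" using sqrt2_facts(1) by linarith
    have rpos: "0 < r" using r2 by simp
    have "2 \<le> r * e" using r2(2) e by (simp add: field_simps)
    then have re: "1 / r < e" using rpos by (simp add: divide_less_eq mult.commute)
    obtain n where n: "n \<in> N0" "meet (X n) (cball 0 r) = meet S (cball 0 r)" using key by blast
    have "rho S (X n) \<le> 1 / r" by (rule rho_le_cball[OF rs n(2)[symmetric]])
    then have "rho S (patch_transl T (y n)) < e" using re unfolding X_def by linarith
    then show "\<exists>x. rho S (patch_transl T x) < e" by blast
  qed
  then show ?thesis using key unfolding X_def by blast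
qed

end


context tset begin

lemma radius_choice: assumes "0 < d" shows "\<exists>r. sqrt 2 < r \<and> 1 / r < d"
proof -
  define r where "r = max 2 (2/d)"
  have r2: "2 \<le> r" "2/d \<le> r" unfolding r_def by simp_all
  then have rs: "sqrt 2 < r" using sqrt2_facts(1) by linarith
  have rpos: "0 < r" using r2 by simp
  have "2 \<le> r * d" using r2(2) assms by (simp add: field_simps)
  then have "1 / r < d" using rpos by (simp add: divide_less_eq mult.commute)
  then show ?thesis using rs by blast
qed

lemma partA:
  assumes "0 < e"
  shows "\<exists>R>0. \<forall>u v c. meet (patch_transl T u) (cball c R) = meet (patch_transl T v) (cball c R) \<longrightarrow>
           norm (f (patch_transl T u) - f (patch_transl T v)) < e"
proof (rule ccontr)
  assume neg: "\<not> ?thesis"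
  have ex: "\<exists>s y w. s \<in> PI \<and> s \<in> patch_transl T y \<and>
      meet (patch_transl T y) (cball 0 (real n)) = meet (patch_transl T (y + w)) (cball 0 (real n)) \<and>
      e \<le> norm (f (patch_transl T y) - f (patch_transl T (y + w)))" for n :: nat
  proof -
    have "0 < real n + CC" using CC_ge by simp
    then obtain u v c where h: "meet (patch_transl T u) (cball c (real n + CC)) = meet (patch_transl T v) (cball c (real n + CC))"
       "\<not> norm (f (patch_transl T u) - f (patch_transl T v)) < e"
      using neg by blast
    obtain s y w where sw: "s \<in> PI" "s \<in> patch_transl T y"
      "meet (patch_transl T y) (cball 0 (real n)) = meet (patch_transl T (y + w)) (cball 0 (real n))"
      "norm (f (patch_transl T u) - f (patch_transl T v)) = norm (f (patch_transl T y) - f (patch_transl T (y + w)))"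
      using reposition[OF h(1)] by blast
    have "e \<le> norm (f (patch_transl T y) - f (patch_transl T (y + w)))" using h(2) sw(4) by simp
    then show ?thesis using sw(1,2,3) by blast
  qed
  have "\<forall>n. \<exists>s. \<exists>y w. s \<in> PI \<and> s \<in> patch_transl T y \<and>
      meet (patch_transl T y) (cball 0 (real n)) = meet (patch_transl T (y + w)) (cball 0 (real n)) \<and>
      e \<le> norm (f (patch_transl T y) - f (patch_transl T (y + w)))" using ex by blast
  then have "\<exists>sf. \<forall>n. \<exists>y w. sf n \<in> PI \<and> sf n \<in> patch_transl T y \<and>
      meet (patch_transl T y) (cball 0 (real n)) = meet (patch_transl T (y + w)) (cball 0 (real n)) \<and>
      e \<le> norm (f (patch_transl T y) - f (patch_transl T (y + w)))" by (rule choice)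
  then obtain sf where "\<forall>n. \<exists>y w. sf n \<in> PI \<and> sf n \<in> patch_transl T y \<and>
      meet (patch_transl T y) (cball 0 (real n)) = meet (patch_transl T (y + w)) (cball 0 (real n)) \<and>
      e \<le> norm (f (patch_transl T y) - f (patch_transl T (y + w)))" by (rule exE)
  then have "\<exists>yf. \<forall>n. \<exists>w. sf n \<in> PI \<and> sf n \<in> patch_transl T (yf n) \<and>
      meet (patch_transl T (yf n)) (cball 0 (real n)) = meet (patch_transl T (yf n + w)) (cball 0 (real n)) \<and>
      e \<le> norm (f (patch_transl T (yf n)) - f (patch_transl T (yf n + w)))" by (rule choice)
  then obtain yf where "\<forall>n. \<exists>w. sf n \<in> PI \<and> sf n \<in> patch_transl T (yf n) \<and>
      meet (patch_transl T (yf n)) (cball 0 (real n)) = meet (patch_transl T (yf n + w)) (cball 0 (real n)) \<and>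
      e \<le> norm (f (patch_transl T (yf n)) - f (patch_transl T (yf n + w)))" by (rule exE)
  then have "\<exists>wf. \<forall>n. sf n \<in> PI \<and> sf n \<in> patch_transl T (yf n) \<and>
      meet (patch_transl T (yf n)) (cball 0 (real n)) = meet (patch_transl T (yf n + wf n)) (cball 0 (real n)) \<and>
      e \<le> norm (f (patch_transl T (yf n)) - f (patch_transl T (yf n + wf n)))" by (rule choice)
  then obtain wf where H: "\<forall>n. sf n \<in> PI \<and> sf n \<in> patch_transl T (yf n) \<and>
      meet (patch_transl T (yf n)) (cball 0 (real n)) = meet (patch_transl T (yf n + wf n)) (cball 0 (real n)) \<and>
      e \<le> norm (f (patch_transl T (yf n)) - f (patch_transl T (yf n + wf n)))" by (rule exE)
  have "range sf \<subseteq> PI" using H by auto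
  then have "finite (range sf)" using PI(1) by (rule finite_subset)
  then have "\<exists>y \<in> range sf. infinite (sf -` {y})" by (rule inf_img_fin_dom[OF _ infinite_UNIV_nat])
  then obtain s0 where inf: "infinite (sf -` {s0})" by blast
  define N0 where "N0 = sf -` {s0}"
  have infN: "infinite N0" using inf unfolding N0_def .
  then obtain n0 where "n0 \<in> N0" using infinite_imp_nonempty by blast
  then have "sf n0 = s0" unfolding N0_def by simp
  moreover have "sf n0 \<in> PI" using H by blast
  ultimately have s0: "s0 \<in> PI" by simp
  have sy: "\<forall>n\<in>N0. s0 \<in> patch_transl T (yf n)"
  proof
    fix n assume "n \<in> N0"
    then have "sf n = s0" unfolding N0_def by simp
    moreover have "sf n \<in> patch_transl T (yf n)" using H by blast
    ultimately show "s0 \<in> patch_transl T (yf n)" by simp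
  qed
  obtain S where S: "S \<in> hull_X T"
    "\<forall>r k. \<exists>n\<in>N0. k \<le> n \<and> meet (patch_transl T (yf n)) (cball 0 r) = meet S (cball 0 r)"
    using limit_point[OF s0 infN sy] by blast
  obtain d where d: "d > 0" "\<forall>S'\<in>hull_X T. rho S' S < d \<longrightarrow> dist (f S') (f S) < e/2"
    using f_cont[OF S(1)] assms by (meson half_gt_zero)
  obtain r where r: "sqrt 2 < r" "1 / r < d" using radius_choice[OF d(1)] by blast
  obtain n where n: "n \<in> N0" "nat \<lceil>r\<rceil> \<le> n" "meet (patch_transl T (yf n)) (cball 0 r) = meet S (cball 0 r)"
    using S(2) by blast
  have "r \<le> real (nat \<lceil>r\<rceil>)" by (rule real_nat_ceiling_ge)
  moreover have "real (nat \<lceil>r\<rceil>) \<le> real n" using n(2) by simp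
  ultimately have rn: "r \<le> real n" by linarith
  have Hn: "meet (patch_transl T (yf n)) (cball 0 (real n)) = meet (patch_transl T (yf n + wf n)) (cball 0 (real n))"
    "e \<le> norm (f (patch_transl T (yf n)) - f (patch_transl T (yf n + wf n)))" using H by auto
  have "meet (patch_transl T (yf n + wf n)) (cball 0 r) = meet (meet (patch_transl T (yf n + wf n)) (cball 0 (real n))) (cball 0 r)"
    by (simp only: meet_meet[OF subset_cball[OF rn]])
  also have "\<dots> = meet (meet (patch_transl T (yf n)) (cball 0 (real n))) (cball 0 r)" by (simp only: Hn(1))
  also have "\<dots> = meet (patch_transl T (yf n)) (cball 0 r)" by (simp only: meet_meet[OF subset_cball[OF rn]])
  finally have m2: "meet (patch_transl T (yf n + wf n)) (cball 0 r) = meet S (cball 0 r)" using n(3) by simp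
  have "rho (patch_transl T (yf n)) S \<le> 1 / r" by (rule rho_le_cball[OF r(1) n(3)])
  then have "rho (patch_transl T (yf n)) S < d" using r(2) by linarith
  then have "dist (f (patch_transl T (yf n))) (f S) < e/2" using d(2) pt_in_hull by blast
  moreover have "rho (patch_transl T (yf n + wf n)) S \<le> 1 / r" by (rule rho_le_cball[OF r(1) m2])
  then have "rho (patch_transl T (yf n + wf n)) S < d" using r(2) by linarith
  then have "dist (f (patch_transl T (yf n + wf n))) (f S) < e/2" using d(2) pt_in_hull by blast
  moreover have "dist (f (patch_transl T (yf n))) (f (patch_transl T (yf n + wf n))) \<le>
     dist (f (patch_transl T (yf n))) (f S) + dist (f (patch_transl T (yf n + wf n))) (f S)"
    by (rule dist_triangle2)
  ultimately have "dist (f (patch_transl T (yf n))) (f (patch_transl T (yf n + wf n))) < e" by linarith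
  then have "norm (f (patch_transl T (yf n)) - f (patch_transl T (yf n + wf n))) < e"
    by (simp only: dist_norm)
  then show False using Hn(2) by simp
qed

lemma part1:
  assumes "0 < e"
  shows "\<exists>R>0. \<forall>S1\<in>hull_X T. \<forall>S2\<in>hull_X T. \<forall>x.
            ne_inside S1 (cball x R) = ne_inside S2 (cball x R) \<longrightarrow> norm (f S1 - f S2) < e"
proof -
  have e3: "0 < e/3" using assms by simp
  obtain RA where RA: "RA > 0" "\<forall>u v c. meet (patch_transl T u) (cball c RA) = meet (patch_transl T v) (cball c RA) \<longrightarrow>
           norm (f (patch_transl T u) - f (patch_transl T v)) < e/3"
    using partA[OF e3] by blast
  define R where "R = RA + D + 1"
  have R: "0 < R" "0 \<le> R" unfolding R_def using RA(1) D_nonneg by simp_all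
  have "\<forall>S1\<in>hull_X T. \<forall>S2\<in>hull_X T. \<forall>x.
            ne_inside S1 (cball x R) = ne_inside S2 (cball x R) \<longrightarrow> norm (f S1 - f S2) < e"
  proof (intro ballI allI impI)
    fix S1 S2 x assume S: "S1 \<in> hull_X T" "S2 \<in> hull_X T" and ne: "ne_inside S1 (cball x R) = ne_inside S2 (cball x R)"
    obtain u1 where u1: "ne_inside S1 (cball x R) = ne_inside (patch_transl T u1) (cball x R)"
        "norm (f S1 - f (patch_transl T u1)) < e/3" using approx[OF S(1) e3 R(2)] by blast
    obtain u2 where u2: "ne_inside S2 (cball x R) = ne_inside (patch_transl T u2) (cball x R)"
        "norm (f S2 - f (patch_transl T u2)) < e/3" using approx[OF S(2) e3 R(2)] by blast
    have "ne_inside (patch_transl T u1) (cball x R) = ne_inside (patch_transl T u2) (cball x R)"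
      using ne u1(1) u2(1) by simp
    moreover have "cball x (RA + D) \<subseteq> cball x R" unfolding R_def by (rule subset_cball) simp
    ultimately have "meet (patch_transl T u1) (cball x RA) = meet (patch_transl T u2) (cball x RA)"
      by (rule meet_from_ne[OF diam_ptT diam_ptT])
    then have m: "norm (f (patch_transl T u1) - f (patch_transl T u2)) < e/3" using RA(2) by blast
    have "f S1 - f S2 = (f S1 - f (patch_transl T u1)) + (f (patch_transl T u1) - f (patch_transl T u2))
        + (f (patch_transl T u2) - f S2)" by simp
    then have "norm (f S1 - f S2) = norm ((f S1 - f (patch_transl T u1)) + (f (patch_transl T u1) - f (patch_transl T u2))
        + (f (patch_transl T u2) - f S2))" by (rule arg_cong[where f=norm])
    moreover have "norm ((f S1 - f (patch_transl T u1)) + (f (patch_transl T u1) - f (patch_transl T u2))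
        + (f (patch_transl T u2) - f S2)) \<le> norm ((f S1 - f (patch_transl T u1)) + (f (patch_transl T u1) - f (patch_transl T u2)))
        + norm (f (patch_transl T u2) - f S2)" by (rule norm_triangle_ineq)
    moreover have "norm ((f S1 - f (patch_transl T u1)) + (f (patch_transl T u1) - f (patch_transl T u2)))
       \<le> norm (f S1 - f (patch_transl T u1)) + norm (f (patch_transl T u1) - f (patch_transl T u2))" by (rule norm_triangle_ineq)
    ultimately have "norm (f S1 - f S2) \<le> norm (f S1 - f (patch_transl T u1)) + norm (f (patch_transl T u1) - f (patch_transl T u2))
        + norm (f (patch_transl T u2) - f S2)" by linarith
    moreover have "norm (f (patch_transl T u2) - f S2) = norm (f S2 - f (patch_transl T u2))"
      by (rule norm_minus_commute)
    ultimately show "norm (f S1 - f S2) < e" using u1(2) u2(2) m by linarith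
  qed
  then show ?thesis using R(1) by blast
qed

lemma ne_inside_A:
  assumes "S \<in> hull_X T" "P \<subseteq> S" "cball x R \<subseteq> patch_supp P"
  shows "ne_inside S (cball x R) = ne_inside P (cball x R)"
proof
  show "ne_inside P (cball x R) \<subseteq> ne_inside S (cball x R)" using assms(2) unfolding ne_inside_def by blast
  show "ne_inside S (cball x R) \<subseteq> ne_inside P (cball x R)"
  proof
    fix t assume t: "t \<in> ne_inside S (cball x R)"
    then have tS: "t \<in> S" and tne: "fst t \<noteq> {}" and tsub: "fst t \<subseteq> cball x R" unfolding ne_inside_def by auto
    have Sp: "is_patch S" by (rule hull_patch[OF assms(1)])
    have tt: "is_tile t" using Sp tS by (simp add: is_patch_def)
    obtain q where q: "q \<in> interior (fst t)" using tile_int_ne[OF tt tne] by blast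
    have "interior (fst t) \<subseteq> interior (cball x R)" using tsub by (rule interior_mono)
    then have qb: "q \<in> ball x R" using q interior_cball[of x R] by blast
    have "q \<in> closure (\<Union>t\<in>P. fst t)" using qb assms(3) unfolding patch_supp_def by auto
    moreover have "open (interior (fst t) \<inter> ball x R)" by (intro open_Int open_interior open_ball)
    moreover have "q \<in> interior (fst t) \<inter> ball x R" using q qb by simp
    ultimately have "(interior (fst t) \<inter> ball x R) \<inter> (\<Union>t\<in>P. fst t) \<noteq> {}"
      using open_Int_closure_eq_empty[of "interior (fst t) \<inter> ball x R" "\<Union>t\<in>P. fst t"] by blast
    then obtain t' z where t': "t' \<in> P" "z \<in> fst t'" "z \<in> interior (fst t)" by blast
    have t'S: "t' \<in> S" using t'(1) assms(2) by blast
    have "is_tile t'" using Sp t'S by (simp add: is_patch_def)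
    then have "z \<in> closure (interior (fst t'))" using t'(2) unfolding is_tile_def by simp
    then have "interior (fst t) \<inter> interior (fst t') \<noteq> {}"
      using open_Int_closure_eq_empty[of "interior (fst t)" "interior (fst t')"] t'(3) by blast
    then have "t = t'" using Sp tS t'S by (auto simp: is_patch_def)
    then show "t \<in> ne_inside P (cball x R)" using t t'(1) unfolding ne_inside_def by simp
  qed
qed

lemma part2:
  assumes "0 < e"
  shows "\<exists>R0>0. \<forall>R\<ge>R0. \<forall>P::('a,'l) tile set. is_patch P \<and> (\<exists>x. cball x R \<subseteq> patch_supp P)
            \<longrightarrow> diameter (f ` A_patch T P) < e"
proof -
  have e2: "0 < e/2" using assms by simp
  obtain R1 where R1: "R1 > 0" "\<forall>S1\<in>hull_X T. \<forall>S2\<in>hull_X T. \<forall>x.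
            ne_inside S1 (cball x R1) = ne_inside S2 (cball x R1) \<longrightarrow> norm (f S1 - f S2) < e/2"
    using part1[OF e2] by blast
  have "\<forall>R\<ge>R1. \<forall>P::('a,'l) tile set. is_patch P \<and> (\<exists>x. cball x R \<subseteq> patch_supp P) \<longrightarrow> diameter (f ` A_patch T P) < e"
  proof (intro allI impI)
    fix R and P :: "('a,'l) tile set" assume R: "R1 \<le> R" and P: "is_patch P \<and> (\<exists>x. cball x R \<subseteq> patch_supp P)"
    then obtain x where x: "cball x R \<subseteq> patch_supp P" by blast
    have "diameter (f ` A_patch T P) \<le> e/2"
    proof (rule diameter_le)
      show "f ` A_patch T P \<noteq> {} \<or> 0 \<le> e/2" using assms by simp
      fix z1 z2 assume "z1 \<in> f ` A_patch T P" "z2 \<in> f ` A_patch T P"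
      then obtain S1 S2 where S: "S1 \<in> hull_X T" "P \<subseteq> S1" "z1 = f S1" "S2 \<in> hull_X T" "P \<subseteq> S2" "z2 = f S2"
        unfolding A_patch_def by blast
      have "ne_inside S1 (cball x R) = ne_inside S2 (cball x R)"
        using ne_inside_A[OF S(1) S(2) x] ne_inside_A[OF S(4) S(5) x] by simp
      then have "ne_inside S1 (cball x R1) = ne_inside S2 (cball x R1)"
        by (rule ne_mono) (rule subset_cball[OF R])
      then have "norm (f S1 - f S2) < e/2" using R1(2) S(1,4) by blast
      then show "norm (z1 - z2) \<le> e/2" using S(3,6) by simp
    qed
    then show "diameter (f ` A_patch T P) < e" using assms by simp
  qed
  then show ?thesis using R1(1) by blast
qed

end

theorem lemma3p4:
  fixes \<T> :: "('a::euclidean_space, 'l) tile set"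
    and f :: "('a, 'l) tile set \<Rightarrow> complex" and a :: 'a
  assumes "is_tiling \<T>" and "FLC \<T>" and "cont_eigenfunction \<T> f a"
  shows "(\<forall>e>0. \<exists>R>0. \<forall>S1\<in>hull_X \<T>. \<forall>S2\<in>hull_X \<T>. \<forall>x.
            inside S1 (cball x R) = inside S2 (cball x R) \<longrightarrow> norm (f S1 - f S2) < e)
       \<and> (\<forall>e>0. \<exists>R0>0. \<forall>R\<ge>R0. \<forall>P. is_patch P \<and> (\<exists>x. cball x R \<subseteq> patch_supp P)
            \<longrightarrow> diameter (f ` A_patch \<T> P) < e)"
proof -
  interpret tset \<T> f a using assms by (unfold_locales)
  have A: "\<forall>e>0. \<exists>R>0. \<forall>S1\<in>hull_X \<T>. \<forall>S2\<in>hull_X \<T>. \<forall>x.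
            inside S1 (cball x R) = inside S2 (cball x R) \<longrightarrow> norm (f S1 - f S2) < e"
  proof (intro allI impI)
    fix e :: real assume e: "0 < e"
    obtain R where R: "R > 0" "\<forall>S1\<in>hull_X \<T>. \<forall>S2\<in>hull_X \<T>. \<forall>x.
            ne_inside S1 (cball x R) = ne_inside S2 (cball x R) \<longrightarrow> norm (f S1 - f S2) < e"
      using part1[OF e] by blast
    have "\<forall>S1\<in>hull_X \<T>. \<forall>S2\<in>hull_X \<T>. \<forall>x.
            inside S1 (cball x R) = inside S2 (cball x R) \<longrightarrow> norm (f S1 - f S2) < e"
      using R(2) ne_from_inside by blast
    then show "\<exists>R>0. \<forall>S1\<in>hull_X \<T>. \<forall>S2\<in>hull_X \<T>. \<forall>x.
            inside S1 (cball x R) = inside S2 (cball x R) \<longrightarrow> norm (f S1 - f S2) < e" using R(1) by blast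
  qed
  have B: "\<forall>e>0. \<exists>R0>0. \<forall>R\<ge>R0. \<forall>P. is_patch P \<and> (\<exists>x. cball x R \<subseteq> patch_supp P)
            \<longrightarrow> diameter (f ` A_patch \<T> P) < e"
    using part2 by blast
  show ?thesis using A B by blast
qed


end
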